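(* Fix $\varepsilon>0$ and any online sequence of service requests. Whenever the algorithm c-REShare$(\varepsilon)$ (defined in the context) handles the arrival of a request $r$, placing all its jobs in a node $i^*$ at layer $\ell^*(r)$ and allocating the VM capabilities $\mu_{b}$ as it prescribes, the resulting deployment of request $r$ is feasible.
   Context: Network: an undirected layered graph whose vertices (nodes) are datacenters. A node is at layer $\ell\ge 0$ if its distance in links from the closest leaf is $\ell$ (leaves are at layer $0$). Every node can host arbitrarily many virtual machines (VMs). Each VM $b$ runs exactly one virtual network function (VNF) $v$ from a finite set $\mathcal V$, has maximum computing capability $\bar\mu>0$ and an allocated capability $\mu_b\le\bar\mu$. Each VNF $v$ has computing complexity $\theta_v\in(0,1]$. Requests: requests $r$ arrive online; each has a set $\mathcal V_r\subseteq\mathcal V$ of VNFs, an arrival time $a_r$, a duration $\tau_r$, a traffic load $\lambda_r\ge\lambda_{\min}$ where $\lambda_{\min}=\inf_r\lambda_r>0$ is known in advance, an end-to-end delay target $D_r$, and an arrival leaf. For $v\in\mathcal V_r$ the pair $(r,v)$ is a job; all jobs of $r$ arrive at $a_r$ and are removed at $a_r+\tau_r$. For a VM $b$ running $v$, $\Lambda(b)$ is the total load $\sum\lambda_{r'}$ of jobs $(r',v)$ assigned to $b$, and every job on $b$ experiences processing latency $1/(\mu_b-\theta_v\Lambda(b))$ (which requires $\mu_b>\theta_v\Lambda(b)$). The forwarding latency from a leaf to a node at layer $\ell$ is $d_\ell$, with $d_{\ell+1}>d_\ell$. The latency of request $r$ is the maximum of $d_\ell$ over the layers $\ell$ hosting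 its jobs plus the sum over its jobs of their processing latencies. Fair delay allocation: $M_{r,v}=1/(\bar\mu-\theta_v\lambda_r)$; $\ell^*(r)$ is the highest layer $\ell$ with $d_\ell+\sum_{v\in\mathcal V_r}M_{r,v}\le D_r$ (assumed to exist); $D_r^v=\frac{M_{r,v}}{\sum_{u\in\mathcal V_r}M_{r,u}}\,(D_r-d_{\ell^*(r)})$. A deployment of $r$ is feasible if each job $(r,v)$ is on a VM $b$ running $v$ with $\mu_b\le\bar\mu$ and $1/(\mu_b-\theta_v\Lambda(b))\le D_r^v$, and the latency of $r$ is at most $D_r$. Latency ranges: for $\varepsilon>0$, $L_0=\big[\frac{1}{\bar\mu-\lambda_{\min}},\frac{1}{\bar\mu-\lambda_{\min}(1+\varepsilon)}\big]$ and $L_j=\big(\frac{1}{\bar\mu-\lambda_{\min}(1+\varepsilon)^j},\frac{1}{\bar\mu-\lambda_{\min}(1+\varepsilon)^{j+1}}\big]$ for $j\ge1$, over the indices $j$ with $\lambda_{\min}(1+\varepsilon)^{j+1}<\bar\mu$. A job $(r,v)$ is associated with $L_j$ if $D_r^v\in L_j$ (every fair delay allocation is presumed to lie in some range). Algorithm c-REShare$(\varepsilon)$: on arrival of $r$, compute $\ell^*(r)$ and choose a node $i^*$ at layer $\ell^*(r)$ (e.g., the least loaded one). For each $v\in\mathcal V_r$, with $j$ such that $D_r^v\in L_j$: a VM $b$ in $i^*$ running $v$ and hosting jobs associated with $L_j$ is viable if $\frac{1}{\bar\mu-\theta_v(\Lambda(b)+\lambda_r)}\le D_r^v$ and $\frac{1}{\bar\mu-\theta_v(\Lambda(b)+\lambda_r)}\le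 D_{r'}^v$ for every job $(r',v)$ already on $b$. If viable VMs exist, place $(r,v)$ on the viable VM with the largest $\Lambda(b)$ and set its capability to $\theta_v\Lambda(b)+1/\min_{(r',v)\in b}D_{r'}^v$ (with $\Lambda(b)$ and the minimum computed including the new job); otherwise open a new VM in $i^*$ running $v$, place $(r,v)$ on it and set its capability to $\theta_v\lambda_r+1/D_r^v$. On departure of $r$, remove each $(r,v)$ from its VM $b$ and reset $\mu_b=\theta_v\Lambda(b)+1/\min_{(r',v)\in b}D_{r'}^v$ over the remaining jobs. *)

theory Defs
  imports Main "HOL-Library.Extended_Real" Complex_Main
begin

definition layer :: "('n \<times> 'n) set \<Rightarrow> 'n set \<Rightarrow> 'n \<Rightarrow> nat" where
  "layer E Lf i = (LEAST k. \<exists>l\<in>Lf. (l, i) \<in> E ^^ k)"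

definition layered_network :: "'n set \<Rightarrow> ('n \<times> 'n) set \<Rightarrow> 'n set \<Rightarrow> bool" where
  "layered_network N E Lf \<longleftrightarrow> finite N \<and> N \<noteq> {} \<and> E \<subseteq> N \<times> N \<and> sym E \<and>
     Lf \<subseteq> N \<and> Lf \<noteq> {} \<and> (\<forall>i\<in>N. \<exists>l\<in>Lf. (l, i) \<in> E\<^sup>*)"

record ('v, 'r) sys =
  mubar :: real               \<comment> \<open>maximum computing capability of a VM\<close>
  theta :: "'v \<Rightarrow> real"      \<comment> \<open>computing complexity of a VNF\<close>
  dl    :: "nat \<Rightarrow> real"     \<comment> \<open>forwarding latency from a leaf to layer l\<close>
  lmin  :: real
  VNFs  :: "'r \<Rightarrow> 'v set"
  lam   :: "'r \<Rightarrow> real"     \<comment> \<open>traffic load of a request\<close>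
  Dt    :: "'r \<Rightarrow> real"     \<comment> \<open>end-to-end delay target of a request\<close>

definition Mrv :: "('v, 'r) sys \<Rightarrow> 'r \<Rightarrow> 'v \<Rightarrow> real" where
  "Mrv P r v = 1 / (mubar P - theta P v * lam P r)"

definition lstar :: "('v, 'r) sys \<Rightarrow> nat set \<Rightarrow> 'r \<Rightarrow> nat" where
  "lstar P Lay r = Max {l \<in> Lay. dl P l + (\<Sum>v\<in>VNFs P r. Mrv P r v) \<le> Dt P r}"

definition Dfair :: "('v, 'r) sys \<Rightarrow> nat set \<Rightarrow> 'r \<Rightarrow> 'v \<Rightarrow> real" where
  "Dfair P Lay r v =
     Mrv P r v / (\<Sum>u\<in>VNFs P r. Mrv P r u) * (Dt P r - dl P (lstar P Lay r))"

definition valid_idx :: "('v, 'r) sys \<Rightarrow> real \<Rightarrow> nat \<Rightarrow> bool" where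
  "valid_idx P eps j \<longleftrightarrow> lmin P * (1 + eps) ^ (j + 1) < mubar P"

definition Lrange :: "('v, 'r) sys \<Rightarrow> real \<Rightarrow> nat \<Rightarrow> real set" where
  "Lrange P eps j =
     (if j = 0 then {1 / (mubar P - lmin P) .. 1 / (mubar P - lmin P * (1 + eps))}
      else {1 / (mubar P - lmin P * (1 + eps) ^ j) <.. 1 / (mubar P - lmin P * (1 + eps) ^ (j + 1))})"

text \<open>A request is admissible if it has a nonempty set of VNFs, each single job fits
  in a VM (theta_v lambda_r < mubar, so that M_{r,v} is a genuine latency), the layer
  l*(r) exists, and each fair delay allocation lies in some latency range.\<close>

definition admissible :: "('v, 'r) sys \<Rightarrow> real \<Rightarrow> nat set \<Rightarrow> 'r \<Rightarrow> bool" where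
  "admissible P eps Lay r \<longleftrightarrow>
     VNFs P r \<noteq> {} \<and>
     (\<forall>v\<in>VNFs P r. theta P v * lam P r < mubar P) \<and>
     {l \<in> Lay. dl P l + (\<Sum>v\<in>VNFs P r. Mrv P r v) \<le> Dt P r} \<noteq> {} \<and>
     (\<forall>v\<in>VNFs P r. \<exists>j. valid_idx P eps j \<and> Dfair P Lay r v \<in> Lrange P eps j)"

text \<open>For an open VM b: host node, the VNF it runs,
  its allocated capability mu_b, the latency-range index of the jobs it hosts, and the
  set of requests r' whose job (r', runs b) is on b.\<close>

record ('n, 'v, 'r) state =
  vms  :: "nat set"
  host :: "nat \<Rightarrow> 'n"
  runs :: "nat \<Rightarrow> 'v"
  cap  :: "nat \<Rightarrow> real"
  cls  :: "nat \<Rightarrow> nat"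
  jobs :: "nat \<Rightarrow> 'r set"

definition empty_state :: "('n, 'v, 'r) state" where
  "empty_state = \<lparr>vms = {}, host = (\<lambda>_. undefined), runs = (\<lambda>_. undefined),
     cap = (\<lambda>_. 0), cls = (\<lambda>_. 0), jobs = (\<lambda>_. {})\<rparr>"

definition Load :: "('v, 'r) sys \<Rightarrow> ('n, 'v, 'r) state \<Rightarrow> nat \<Rightarrow> real" where
  "Load P s b = (\<Sum>r'\<in>jobs s b. lam P r')"

definition viable ::
  "('v, 'r) sys \<Rightarrow> nat set \<Rightarrow> ('n, 'v, 'r) state \<Rightarrow> nat \<Rightarrow> 'r \<Rightarrow> 'v \<Rightarrow> bool" where
  "viable P Lay s b r v \<longleftrightarrow>
     theta P v * (Load P s b + lam P r) < mubar P \<and>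
     1 / (mubar P - theta P v * (Load P s b + lam P r)) \<le> Dfair P Lay r v \<and>
     (\<forall>r'\<in>jobs s b. 1 / (mubar P - theta P v * (Load P s b + lam P r)) \<le> Dfair P Lay r' v)"

definition place_job ::
  "('v, 'r) sys \<Rightarrow> real \<Rightarrow> nat set \<Rightarrow> 'n \<Rightarrow> 'r \<Rightarrow> 'v
     \<Rightarrow> ('n, 'v, 'r) state \<Rightarrow> ('n, 'v, 'r) state \<Rightarrow> bool" where
  "place_job P eps Lay i r v s s' \<longleftrightarrow>
     (\<exists>j. valid_idx P eps j \<and> Dfair P Lay r v \<in> Lrange P eps j \<and>
       (let V = {b \<in> vms s. host s b = i \<and> runs s b = v \<and> cls s b = j \<and> viable P Lay s b r v} in
         (V \<noteq> {} \<and>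
           (\<exists>b\<in>V. (\<forall>b'\<in>V. Load P s b' \<le> Load P s b) \<and>
              s' = s\<lparr>jobs := (jobs s)(b := insert r (jobs s b)),
                     cap := (cap s)(b := theta P v * (Load P s b + lam P r)
                        + 1 / Min ((\<lambda>r'. Dfair P Lay r' v) ` insert r (jobs s b)))\<rparr>))
         \<or>
         (V = {} \<and>
           (\<exists>b. b \<notin> vms s \<and>
              s' = s\<lparr>vms := insert b (vms s), host := (host s)(b := i),
                     runs := (runs s)(b := v),
                     cap := (cap s)(b := theta P v * lam P r + 1 / Dfair P Lay r v),
                     cls := (cls s)(b := j), jobs := (jobs s)(b := {r})\<rparr>))))"

fun place_jobs ::
  "('v, 'r) sys \<Rightarrow> real \<Rightarrow> nat set \<Rightarrow> 'n \<Rightarrow> 'r \<Rightarrow> 'v list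
     \<Rightarrow> ('n, 'v, 'r) state \<Rightarrow> ('n, 'v, 'r) state \<Rightarrow> bool" where
  "place_jobs P eps Lay i r [] s s' \<longleftrightarrow> s' = s"
| "place_jobs P eps Lay i r (v # vs) s s' \<longleftrightarrow>
     (\<exists>t. place_job P eps Lay i r v s t \<and> place_jobs P eps Lay i r vs t s')"

text \<open>Handling of the arrival of request r: choose any node i* at layer l*(r) (e.g. the
  least loaded one) and place the jobs of r one after the other (in any order).\<close>

definition arrive ::
  "('v, 'r) sys \<Rightarrow> real \<Rightarrow> 'n set \<Rightarrow> ('n \<times> 'n) set \<Rightarrow> 'n set \<Rightarrow> 'r
     \<Rightarrow> ('n, 'v, 'r) state \<Rightarrow> ('n, 'v, 'r) state \<Rightarrow> bool" where
  "arrive P eps N E Lf r s s' \<longleftrightarrow>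
     (let Lay = layer E Lf ` N in
      \<exists>istar\<in>N. layer E Lf istar = lstar P Lay r \<and>
        (\<exists>vs. distinct vs \<and> set vs = VNFs P r \<and> place_jobs P eps Lay istar r vs s s'))"

definition depart ::
  "('v, 'r) sys \<Rightarrow> nat set \<Rightarrow> 'r \<Rightarrow> ('n, 'v, 'r) state \<Rightarrow> ('n, 'v, 'r) state" where
  "depart P Lay r s =
     s\<lparr>jobs := (\<lambda>b. jobs s b - {r}),
       cap := (\<lambda>b. if b \<in> vms s \<and> r \<in> jobs s b \<and> jobs s b - {r} \<noteq> {}
                   then theta P (runs s b) * (\<Sum>r'\<in>jobs s b - {r}. lam P r')
                        + 1 / Min ((\<lambda>r'. Dfair P Lay r' (runs s b)) ` (jobs s b - {r}))
                   else cap s b)\<rparr>"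

text \<open>States reachable by the algorithm on an online sequence of arrivals and departures;
  the second component is the set of requests that have already arrived.\<close>

inductive reachable ::
  "('v, 'r) sys \<Rightarrow> real \<Rightarrow> 'n set \<Rightarrow> ('n \<times> 'n) set \<Rightarrow> 'n set
     \<Rightarrow> ('n, 'v, 'r) state \<Rightarrow> 'r set \<Rightarrow> bool"
  for P eps N E Lf where
  init: "reachable P eps N E Lf empty_state {}"
| arr:  "reachable P eps N E Lf s A \<Longrightarrow> r \<notin> A \<Longrightarrow> arrive P eps N E Lf r s s'
           \<Longrightarrow> reachable P eps N E Lf s' (insert r A)"
| dep:  "reachable P eps N E Lf s A \<Longrightarrow> r \<in> A
           \<Longrightarrow> reachable P eps N E Lf (depart P (layer E Lf ` N) r s) A"

definition proc_lat :: "('v, 'r) sys \<Rightarrow> ('n, 'v, 'r) state \<Rightarrow> nat \<Rightarrow> real" where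
  "proc_lat P s b = 1 / (cap s b - theta P (runs s b) * Load P s b)"

definition latency ::
  "('v, 'r) sys \<Rightarrow> ('n \<times> 'n) set \<Rightarrow> 'n set \<Rightarrow> ('n, 'v, 'r) state \<Rightarrow> 'r
     \<Rightarrow> ('v \<Rightarrow> nat) \<Rightarrow> real" where
  "latency P E Lf s r pl =
     Max ((\<lambda>v. dl P (layer E Lf (host s (pl v)))) ` VNFs P r)
     + (\<Sum>v\<in>VNFs P r. proc_lat P s (pl v))"

definition feasible ::
  "('v, 'r) sys \<Rightarrow> 'n set \<Rightarrow> ('n \<times> 'n) set \<Rightarrow> 'n set \<Rightarrow> ('n, 'v, 'r) state \<Rightarrow> 'r \<Rightarrow> bool" where
  "feasible P N E Lf s r \<longleftrightarrow>
     (let Lay = layer E Lf ` N in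
      \<exists>pl. (\<forall>v\<in>VNFs P r. \<forall>b. (b \<in> vms s \<and> runs s b = v \<and> r \<in> jobs s b) \<longleftrightarrow> b = pl v) \<and>
           (\<forall>v\<in>VNFs P r.
              cap s (pl v) \<le> mubar P \<and>
              theta P v * Load P s (pl v) < cap s (pl v) \<and>
              proc_lat P s (pl v) \<le> Dfair P Lay r v) \<and>
           latency P E Lf s r pl \<le> Dt P r)"

end

theory Submission
  imports Defs
begin

lemma place_job_jobs:
  assumes "place_job P eps Lay i r v s t"
  shows "jobs t b \<subseteq> insert r (jobs s b) \<and> (finite (jobs s b) \<longrightarrow> finite (jobs t b))"
  using assms unfolding place_job_def Let_def
  by (elim exE conjE disjE bexE; auto)

lemma place_jobs_jobs:
  "place_jobs P eps Lay i r vs s s' \<Longrightarrow>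
   jobs s' b \<subseteq> insert r (jobs s b) \<and> (finite (jobs s b) \<longrightarrow> finite (jobs s' b))"
proof (induction vs arbitrary: s)
  case Nil then show ?case by auto
next
  case (Cons v vs)
  then obtain t where t: "place_job P eps Lay i r v s t" "place_jobs P eps Lay i r vs t s'" by auto
  from place_job_jobs[OF t(1), of b] Cons.IH[OF t(2)] show ?case by blast
qed

lemma reach_inv:
  "reachable P eps N E Lf s A \<Longrightarrow> \<forall>b. finite (jobs s b) \<and> jobs s b \<subseteq> A"
proof (induction rule: reachable.induct)
  case init then show ?case by (simp add: empty_state_def)
next
  case (arr s A r s')
  show ?case
  proof
    fix b
    from arr.hyps(3) obtain i vs where "place_jobs P eps (layer E Lf ` N) i r vs s s'"
      unfolding arrive_def Let_def by blast
    from place_jobs_jobs[OF this, of b] arr.IH show "finite (jobs s' b) \<and> jobs s' b \<subseteq> insert r A"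
      by blast
  qed
next
  case (dep s A r)
  then show ?case by (auto simp: depart_def)
qed

definition goodvm where
  "goodvm P Lay i r s b v \<longleftrightarrow> b \<in> vms s \<and> runs s b = v \<and> r \<in> jobs s b \<and> host s b = i \<and>
     cap s b \<le> mubar P \<and> theta P v * Load P s b < cap s b \<and> proc_lat P s b \<le> Dfair P Lay r v"

lemma num_aux:
  fixes x m mu D :: real
  assumes "x < mu" "1 / (mu - x) \<le> m" "m \<le> D"
  shows "x + 1 / m \<le> mu \<and> x < x + 1 / m \<and> 1 / (x + 1 / m - x) \<le> D"
proof -
  have p: "mu - x > 0" using assms by simp
  have mp: "m > 0" using assms(2) p by (meson divide_pos_pos less_le_trans zero_less_one)
  have "1 / m \<le> 1 / (1 / (mu - x))" using assms(2) p mp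
    by (intro frac_le) auto
  then have "1 / m \<le> mu - x" by simp
  then show ?thesis using mp assms by simp
qed

lemma place_job_step:
  assumes pj: "place_job P eps Lay i r v s t"
    and fin: "\<forall>b. finite (jobs s b)"
    and rj: "\<forall>b. r \<in> jobs s b \<longrightarrow> b \<in> vms s \<and> runs s b \<noteq> v"
    and lt: "theta P v * lam P r < mubar P"
    and Dge: "1 / (mubar P - theta P v * lam P r) \<le> Dfair P Lay r v"
  shows "\<exists>b0. goodvm P Lay i r t b0 v \<and> vms t = insert b0 (vms s) \<and>
     (b0 \<in> vms s \<longrightarrow> runs s b0 = v) \<and> finite (jobs t b0) \<and>
     (\<forall>b. b \<noteq> b0 \<longrightarrow> runs t b = runs s b \<and> host t b = host s b \<and> cap t b = cap s b \<and> jobs t b = jobs s b)"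
proof -
  from pj obtain j where
    cases: "(let V = {b \<in> vms s. host s b = i \<and> runs s b = v \<and> cls s b = j \<and> viable P Lay s b r v} in
         (V \<noteq> {} \<and>
           (\<exists>b\<in>V. (\<forall>b'\<in>V. Load P s b' \<le> Load P s b) \<and>
              t = s\<lparr>jobs := (jobs s)(b := insert r (jobs s b)),
                     cap := (cap s)(b := theta P v * (Load P s b + lam P r)
                        + 1 / Min ((\<lambda>r'. Dfair P Lay r' v) ` insert r (jobs s b)))\<rparr>))
         \<or>
         (V = {} \<and>
           (\<exists>b. b \<notin> vms s \<and>
              t = s\<lparr>vms := insert b (vms s), host := (host s)(b := i),
                     runs := (runs s)(b := v),
                     cap := (cap s)(b := theta P v * lam P r + 1 / Dfair P Lay r v),
                     cls := (cls s)(b := j), jobs := (jobs s)(b := {r})\<rparr>)))"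
    unfolding place_job_def by blast
  show ?thesis
  proof (cases "\<exists>b\<in>{b \<in> vms s. host s b = i \<and> runs s b = v \<and> cls s b = j \<and> viable P Lay s b r v}.
       t = s\<lparr>jobs := (jobs s)(b := insert r (jobs s b)),
                     cap := (cap s)(b := theta P v * (Load P s b + lam P r)
                        + 1 / Min ((\<lambda>r'. Dfair P Lay r' v) ` insert r (jobs s b)))\<rparr>")
    case True
    then obtain b where b: "b \<in> vms s" "host s b = i" "runs s b = v" "viable P Lay s b r v"
      and t: "t = s\<lparr>jobs := (jobs s)(b := insert r (jobs s b)),
                     cap := (cap s)(b := theta P v * (Load P s b + lam P r)
                        + 1 / Min ((\<lambda>r'. Dfair P Lay r' v) ` insert r (jobs s b)))\<rparr>" by blast
    define x where "x = theta P v * (Load P s b + lam P r)"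
    define m where "m = Min ((\<lambda>r'. Dfair P Lay r' v) ` insert r (jobs s b))"
    have rn: "r \<notin> jobs s b" using rj b by blast
    have v: "x < mubar P" "1 / (mubar P - x) \<le> Dfair P Lay r v"
      "\<forall>r'\<in>jobs s b. 1 / (mubar P - x) \<le> Dfair P Lay r' v"
      using b(4) unfolding viable_def x_def by auto
    have m1: "1 / (mubar P - x) \<le> m" unfolding m_def using fin v
      by (subst Min_ge_iff) auto
    have m2: "m \<le> Dfair P Lay r v" unfolding m_def using fin
      by (intro Min_le) auto
    have L: "Load P t b = Load P s b + lam P r"
      using t rn fin by (simp add: Load_def)
    have na: "x + 1 / m \<le> mubar P \<and> x < x + 1 / m \<and> 1 / (x + 1 / m - x) \<le> Dfair P Lay r v"
      using num_aux[OF v(1) m1 m2] .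
    have "goodvm P Lay i r t b v"
      unfolding goodvm_def proc_lat_def using t b na L
      by (simp add: x_def m_def algebra_simps)
    moreover have "vms t = insert b (vms s)" using t b by auto
    ultimately show ?thesis using t b fin
      by (intro exI[of _ b]) auto
  next
    case False
    then obtain b where b: "b \<notin> vms s"
      and t: "t = s\<lparr>vms := insert b (vms s), host := (host s)(b := i),
                     runs := (runs s)(b := v),
                     cap := (cap s)(b := theta P v * lam P r + 1 / Dfair P Lay r v),
                     cls := (cls s)(b := j), jobs := (jobs s)(b := {r})\<rparr>"
      using cases unfolding Let_def by blast
    define x where "x = theta P v * lam P r"
    have na: "x + 1 / Dfair P Lay r v \<le> mubar P \<and> x < x + 1 / Dfair P Lay r v
        \<and> 1 / (x + 1 / Dfair P Lay r v - x) \<le> Dfair P Lay r v"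
      using num_aux[of x "mubar P" "Dfair P Lay r v" "Dfair P Lay r v"] lt Dge by (simp add: x_def)
    have L: "Load P t b = lam P r" using t by (simp add: Load_def)
    have "goodvm P Lay i r t b v"
      unfolding goodvm_def proc_lat_def using t na L
      by (simp add: x_def algebra_simps)
    then show ?thesis using t b by (intro exI[of _ b]) auto
  qed
qed

lemma place_jobs_main:
  assumes "place_jobs P eps Lay i r vs s s'"
    and "distinct vs"
    and "\<forall>b. finite (jobs s b)"
    and "\<forall>b. r \<in> jobs s b \<longrightarrow> b \<in> vms s \<and> runs s b \<notin> set vs"
    and "\<forall>v\<in>set vs. theta P v * lam P r < mubar P \<and>
            1 / (mubar P - theta P v * lam P r) \<le> Dfair P Lay r v"
  shows "(\<forall>b. finite (jobs s' b)) \<and>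
    (\<forall>b. r \<in> jobs s' b \<longrightarrow> b \<in> vms s' \<and> (r \<in> jobs s b \<or> runs s' b \<in> set vs)) \<and>
    (\<forall>b\<in>vms s. b \<in> vms s' \<and> runs s' b = runs s b) \<and>
    (\<forall>b. b \<in> vms s \<and> runs s b \<notin> set vs \<longrightarrow> host s' b = host s b \<and> cap s' b = cap s b
        \<and> jobs s' b = jobs s b) \<and>
    (\<forall>v\<in>set vs. \<exists>b0. goodvm P Lay i r s' b0 v \<and>
        (\<forall>b. b \<in> vms s' \<and> runs s' b = v \<and> r \<in> jobs s' b \<longrightarrow> b = b0))"
  using assms
proof (induction vs arbitrary: s)
  case Nil then show ?case by auto
next
  case (Cons v vs)
  from Cons.prems(1) obtain t where t: "place_job P eps Lay i r v s t" "place_jobs P eps Lay i r vs t s'"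
    by (metis place_jobs.simps(2))
  have vn: "v \<notin> set vs" and dvs: "distinct vs" using Cons.prems(2) by auto
  have rj0: "\<forall>b. r \<in> jobs s b \<longrightarrow> b \<in> vms s \<and> runs s b \<noteq> v" using Cons.prems(4) by simp
  have nv: "theta P v * lam P r < mubar P" "1 / (mubar P - theta P v * lam P r) \<le> Dfair P Lay r v"
    using Cons.prems(5) by auto
  have nvs: "\<forall>v\<in>set vs. theta P v * lam P r < mubar P \<and>
            1 / (mubar P - theta P v * lam P r) \<le> Dfair P Lay r v" using Cons.prems(5) by simp
  obtain b0 where b0: "goodvm P Lay i r t b0 v" "vms t = insert b0 (vms s)"
     "b0 \<in> vms s \<longrightarrow> runs s b0 = v" "finite (jobs t b0)"
     "\<forall>b. b \<noteq> b0 \<longrightarrow> runs t b = runs s b \<and> host t b = host s b \<and> cap t b = cap s b \<and> jobs t b = jobs s b"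
    using place_job_step[OF t(1) Cons.prems(3) rj0 nv] by blast
  have finT: "\<forall>b. finite (jobs t b)" using b0(4,5) Cons.prems(3) by metis
  have runs0: "runs t b0 = v" "b0 \<in> vms t" "r \<in> jobs t b0" using b0(1) unfolding goodvm_def by auto
  have rjT: "\<forall>b. r \<in> jobs t b \<longrightarrow> b \<in> vms t \<and> runs t b \<notin> set vs"
  proof (intro allI impI)
    fix b assume "r \<in> jobs t b"
    show "b \<in> vms t \<and> runs t b \<notin> set vs"
    proof (cases "b = b0")
      case True then show ?thesis using runs0 vn by simp
    next
      case False then show ?thesis using b0(2,5) Cons.prems(4) \<open>r \<in> jobs t b\<close> by simp
    qed
  qed
  have IH: "(\<forall>b. finite (jobs s' b)) \<and>
    (\<forall>b. r \<in> jobs s' b \<longrightarrow> b \<in> vms s' \<and> (r \<in> jobs t b \<or> runs s' b \<in> set vs)) \<and>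
    (\<forall>b\<in>vms t. b \<in> vms s' \<and> runs s' b = runs t b) \<and>
    (\<forall>b. b \<in> vms t \<and> runs t b \<notin> set vs \<longrightarrow> host s' b = host t b \<and> cap s' b = cap t b
        \<and> jobs s' b = jobs t b) \<and>
    (\<forall>v\<in>set vs. \<exists>b0. goodvm P Lay i r s' b0 v \<and>
        (\<forall>b. b \<in> vms s' \<and> runs s' b = v \<and> r \<in> jobs s' b \<longrightarrow> b = b0))"
    by (rule Cons.IH[OF t(2) dvs finT rjT nvs])
  from IH have I1: "\<forall>b. finite (jobs s' b)"
    and I2: "\<And>b. r \<in> jobs s' b \<Longrightarrow> b \<in> vms s' \<and> (r \<in> jobs t b \<or> runs s' b \<in> set vs)"
    and I3: "\<And>b. b \<in> vms t \<Longrightarrow> b \<in> vms s' \<and> runs s' b = runs t b"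
    and I4: "\<And>b. b \<in> vms t \<Longrightarrow> runs t b \<notin> set vs \<Longrightarrow> host s' b = host t b \<and> cap s' b = cap t b
        \<and> jobs s' b = jobs t b"
    and I5: "\<forall>v\<in>set vs. \<exists>b0. goodvm P Lay i r s' b0 v \<and>
        (\<forall>b. b \<in> vms s' \<and> runs s' b = v \<and> r \<in> jobs s' b \<longrightarrow> b = b0)"
    by blast+
  have A: "\<forall>b. r \<in> jobs s' b \<longrightarrow> b \<in> vms s' \<and> (r \<in> jobs s b \<or> runs s' b \<in> set (v # vs))"
  proof (intro allI impI)
    fix b assume h: "r \<in> jobs s' b"
    note i2 = I2[OF h]
    show "b \<in> vms s' \<and> (r \<in> jobs s b \<or> runs s' b \<in> set (v # vs))"
    proof (cases "b = b0")
      case True then show ?thesis using i2 I3 runs0 by simp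
    next
      case False then show ?thesis using i2 b0(5) by auto
    qed
  qed
  have B: "\<forall>b\<in>vms s. b \<in> vms s' \<and> runs s' b = runs s b"
  proof
    fix b assume h: "b \<in> vms s"
    have bt: "b \<in> vms t" using h b0(2) by simp
    show "b \<in> vms s' \<and> runs s' b = runs s b"
    proof (cases "b = b0")
      case True then show ?thesis using I3[OF bt] runs0 b0(3) h by simp
    next
      case False then show ?thesis using I3[OF bt] b0(5) by simp
    qed
  qed
  have C: "\<forall>b. b \<in> vms s \<and> runs s b \<notin> set (v # vs) \<longrightarrow> host s' b = host s b \<and> cap s' b = cap s b
        \<and> jobs s' b = jobs s b"
  proof (intro allI impI)
    fix b assume h: "b \<in> vms s \<and> runs s b \<notin> set (v # vs)"
    then have ne: "b \<noteq> b0" using b0(3) by auto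
    have bt: "b \<in> vms t" using h b0(2) by simp
    have rt: "runs t b \<notin> set vs" using ne b0(5) h by simp
    show "host s' b = host s b \<and> cap s' b = cap s b \<and> jobs s' b = jobs s b"
      using I4[OF bt rt] ne b0(5) by simp
  qed
  have G0: "goodvm P Lay i r s' b0 v"
  proof -
    have e1: "b0 \<in> vms s'" "runs s' b0 = runs t b0" using I3[OF runs0(2)] by auto
    have e2: "host s' b0 = host t b0" "cap s' b0 = cap t b0" "jobs s' b0 = jobs t b0"
      using I4[OF runs0(2)] runs0(1) vn by auto
    have "Load P s' b0 = Load P t b0" using e2 by (simp add: Load_def)
    then show ?thesis using b0(1) e1 e2 runs0(1) unfolding goodvm_def proc_lat_def by simp
  qed
  have U: "\<forall>b. b \<in> vms s' \<and> runs s' b = v \<and> r \<in> jobs s' b \<longrightarrow> b = b0"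
  proof (intro allI impI)
    fix b assume h: "b \<in> vms s' \<and> runs s' b = v \<and> r \<in> jobs s' b"
    then have rt: "r \<in> jobs t b" using I2 vn by blast
    then have bt: "b \<in> vms t" using rjT by blast
    then have "runs t b = v" using I3 h by metis
    show "b = b0"
    proof (rule ccontr)
      assume "b \<noteq> b0"
      then have "r \<in> jobs s b" "runs s b = v" using b0(5) rt \<open>runs t b = v\<close> by auto
      then show False using Cons.prems(4) by simp
    qed
  qed
  have Fv: "\<forall>v'\<in>set (v # vs). \<exists>b0. goodvm P Lay i r s' b0 v' \<and>
        (\<forall>b. b \<in> vms s' \<and> runs s' b = v' \<and> r \<in> jobs s' b \<longrightarrow> b = b0)"
    using I5 G0 U by auto
  show ?case using I1 A B C Fv by blast
qed

theorem lemma1: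
  fixes P :: "('v::finite, 'r) sys"
    and eps :: real
    and N :: "'n set" and E :: "('n \<times> 'n) set" and Lf :: "'n set"
    and s s' :: "('n, 'v, 'r) state" and A :: "'r set" and r :: 'r
  assumes net: "layered_network N E Lf"
    and mubar_pos: "mubar P > 0"
    and theta: "\<forall>v. 0 < theta P v \<and> theta P v \<le> 1"
    and d_mono: "\<forall>l. dl P l < dl P (Suc l)"
    and lmin_lb: "\<forall>r'. lmin P \<le> lam P r'"
    and lmin_inf: "lmin P = (INF r'. lam P r')"
    and lmin_pos: "lmin P > 0"
    and eps_pos: "eps > 0"
    and adm: "\<forall>r'. admissible P eps (layer E Lf ` N) r'"
    and reach: "reachable P eps N E Lf s A"
    and fresh: "r \<notin> A"
    and step: "arrive P eps N E Lf r s s'"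
  shows "feasible P N E Lf s' r"
proof -
  define Lay where "Lay = layer E Lf ` N"
  from step obtain istar vs where ist: "istar \<in> N" "layer E Lf istar = lstar P Lay r"
    and vs: "distinct vs" "set vs = VNFs P r" "place_jobs P eps Lay istar r vs s s'"
    unfolding arrive_def Let_def Lay_def by blast
  have ad: "admissible P eps Lay r" using adm Lay_def by simp
  define S where "S = {l \<in> Lay. dl P l + (\<Sum>v\<in>VNFs P r. Mrv P r v) \<le> Dt P r}"
  have finLay: "finite Lay" using net unfolding Lay_def layered_network_def by simp
  have Sne: "S \<noteq> {}" using ad unfolding admissible_def S_def by simp
  have "lstar P Lay r \<in> S" unfolding lstar_def S_def[symmetric]
    using Sne finLay by (intro Max_in) (auto simp: S_def)
  then have lsS: "dl P (lstar P Lay r) + (\<Sum>v\<in>VNFs P r. Mrv P r v) \<le> Dt P r" by (simp add: S_def)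
  have Vne: "VNFs P r \<noteq> {}" and lt: "\<forall>v\<in>VNFs P r. theta P v * lam P r < mubar P"
    using ad unfolding admissible_def by auto
  have Mpos: "\<forall>v\<in>VNFs P r. Mrv P r v > 0" using lt by (simp add: Mrv_def)
  have finV: "finite (VNFs P r)" by simp
  have SMpos: "(\<Sum>v\<in>VNFs P r. Mrv P r v) > 0" using Mpos Vne finV by (simp add: sum_pos)
  define Sm where "Sm = (\<Sum>v\<in>VNFs P r. Mrv P r v)"
  define Dd where "Dd = Dt P r - dl P (lstar P Lay r)"
  have DdS: "Sm \<le> Dd" using lsS by (simp add: Sm_def Dd_def)
  have Dge: "\<forall>v\<in>VNFs P r. 1 / (mubar P - theta P v * lam P r) \<le> Dfair P Lay r v"
  proof
    fix v assume v: "v \<in> VNFs P r"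
    have "Mrv P r v / Sm * Sm \<le> Mrv P r v / Sm * Dd"
      using DdS Mpos v SMpos by (intro mult_left_mono) (auto simp: Sm_def)
    moreover have "Mrv P r v / Sm * Sm = Mrv P r v" using SMpos by (simp add: Sm_def)
    moreover have "Dfair P Lay r v = Mrv P r v / Sm * Dd" by (simp add: Dfair_def Sm_def Dd_def)
    ultimately show "1 / (mubar P - theta P v * lam P r) \<le> Dfair P Lay r v"
      by (simp add: Mrv_def)
  qed
  have inv: "\<forall>b. finite (jobs s b) \<and> jobs s b \<subseteq> A" using reach_inv[OF reach] .
  have M: "(\<forall>v\<in>set vs. \<exists>b0. goodvm P Lay istar r s' b0 v \<and>
        (\<forall>b. b \<in> vms s' \<and> runs s' b = v \<and> r \<in> jobs s' b \<longrightarrow> b = b0))"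
    using place_jobs_main[OF vs(3) vs(1)] inv fresh lt Dge vs(2) by blast
  then obtain pl where pl: "\<forall>v\<in>VNFs P r. goodvm P Lay istar r s' (pl v) v \<and>
        (\<forall>b. b \<in> vms s' \<and> runs s' b = v \<and> r \<in> jobs s' b \<longrightarrow> b = pl v)"
    using vs(2) by metis
  have P1: "\<forall>v\<in>VNFs P r. \<forall>b. (b \<in> vms s' \<and> runs s' b = v \<and> r \<in> jobs s' b) \<longleftrightarrow> b = pl v"
    using pl unfolding goodvm_def by blast
  have P2: "\<forall>v\<in>VNFs P r. cap s' (pl v) \<le> mubar P \<and> theta P v * Load P s' (pl v) < cap s' (pl v) \<and>
              proc_lat P s' (pl v) \<le> Dfair P Lay r v"
    using pl unfolding goodvm_def by blast
  have img: "(\<lambda>v. dl P (layer E Lf (host s' (pl v)))) ` VNFs P r = {dl P (lstar P Lay r)}"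
    using pl Vne ist(2) unfolding goodvm_def by auto
  have "(\<Sum>v\<in>VNFs P r. proc_lat P s' (pl v)) \<le> (\<Sum>v\<in>VNFs P r. Dfair P Lay r v)"
    using P2 by (intro sum_mono) auto
  also have "\<dots> = Sm * (Dd / Sm)"
    unfolding Dfair_def Dd_def[symmetric] Sm_def
    by (subst sum_distrib_right) (rule sum.cong, simp_all)
  also have "\<dots> = Dd"
  proof -
    have ne: "Sm \<noteq> 0" using SMpos by (simp add: Sm_def)
    show ?thesis using ne unfolding Sm_def[symmetric] by simp
  qed
  finally have "latency P E Lf s' r pl \<le> Dt P r"
    unfolding latency_def img by (simp add: Dd_def)
  then show ?thesis unfolding feasible_def Let_def Lay_def[symmetric] using P1 P2 by blast
qed

end
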